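(* Let $B_1$ and $B_2$ be $m$-level rook equivalent singleton boards, both written with $n$ columns, such that $\{B_1,B_2\}$ is an edge of the $m$-level rook equivalence graph. Then the $m$-level root vectors $\xi_m(B_1)$ and $\xi_m(B_2)$ differ only in two positions, whose entries are swapped. That is, if $\xi_m(B_1)=\langle z_1,\ldots,z_{i_1},\ldots,z_{i_2},\ldots,z_n\rangle$ then $\xi_m(B_2)=\langle z_1,\ldots,z_{i_2},\ldots,z_{i_1},\ldots,z_n\rangle$ for some $1\le i_1<i_2\le n$ with $z_{i_1}\ne z_{i_2}$.
   Context: Fix an integer $m>0$. A Ferrers board is given by a weakly increasing sequence of non-negative integers $B=(b_1,\ldots,b_n)$ of column heights (cells in column $i$, rows $1,\ldots,b_i$, of the first quadrant); prepending height-$0$ columns on the left does not change the board, and boards are compared with the same number of columns by such padding. The rows are partitioned into levels: level $t$ consists of rows $(t-1)m+1,\ldots,tm$. An $m$-level rook placement of $k$ rooks is a set of $k$ cells of $B$, no two in the same level or the same column; $r_{k,m}(B)$ is their number, and two boards are $m$-level rook equivalent if they have equal $r_{k,m}$ for all $k\ge0$. For an integer $o$, $\lfloor o\rfloor_m$ is the largest multiple of $m$ that is $\le o$. $B$ is singleton if for each $i<n$, $b_i-\lfloor b_i\rfloor_m\ne0$ implies $\lfloor b_i\rfloor_m<\lfloor b_{i+1}\rfloor_m$. The $m$-level root vector of $B$ is $\xi_m(B)=\langle 0-b_1,m-b_2,\ldots,m(n-1)-b_n\rangle$. The $m$-level rook equivalence graph of the class of a singleton board $B$ has as vertices all singleton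 boards $m$-level rook equivalent to $B$, and $\{B_1,B_2\}$ is an edge iff, written with the same number of columns, $B_1$ and $B_2$ differ in exactly two columns $i,j$, where $B_1$ has $k$ more cells than $B_2$ in column $i$ and $k$ fewer in column $j$, for some $k>0$. *)

theory Defs
  imports Main
begin

text \<open>A Ferrers board is a list of column heights (b_1,...,b_n), weakly increasing.
  Column i (1-based) contains the cells (i, r) with 1 \<le> r \<le> b_i.\<close>

definition ferrers :: "nat list \<Rightarrow> bool" where
  "ferrers B \<longleftrightarrow> sorted B"

definition cells :: "nat list \<Rightarrow> (nat \<times> nat) set" where
  "cells B = {(i, r). 1 \<le> i \<and> i \<le> length B \<and> 1 \<le> r \<and> r \<le> B ! (i - 1)}"

text \<open>Level of row r (rows numbered from 1): level t consists of rows (t-1)m+1..tm;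
  we use the 0-based level index (r-1) div m.\<close>
definition level :: "nat \<Rightarrow> nat \<Rightarrow> nat" where
  "level m r = (r - 1) div m"

definition m_level_rook_placements :: "nat \<Rightarrow> nat \<Rightarrow> nat list \<Rightarrow> (nat \<times> nat) set set" where
  "m_level_rook_placements m k B =
     {S. S \<subseteq> cells B \<and> card S = k \<and>
         (\<forall>c\<in>S. \<forall>d\<in>S. c \<noteq> d \<longrightarrow> fst c \<noteq> fst d \<and> level m (snd c) \<noteq> level m (snd d))}"

definition rook_num :: "nat \<Rightarrow> nat \<Rightarrow> nat list \<Rightarrow> nat" where
  "rook_num k m B = card (m_level_rook_placements m k B)"

definition m_level_rook_equiv :: "nat \<Rightarrow> nat list \<Rightarrow> nat list \<Rightarrow> bool" where
  "m_level_rook_equiv m B1 B2 \<longleftrightarrow> (\<forall>k. rook_num k m B1 = rook_num k m B2)"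

definition floor_m :: "nat \<Rightarrow> nat \<Rightarrow> nat" where
  "floor_m m b = b - b mod m"

definition singleton_board :: "nat \<Rightarrow> nat list \<Rightarrow> bool" where
  "singleton_board m B \<longleftrightarrow>
     (\<forall>i. i + 1 < length B \<longrightarrow> B ! i - floor_m m (B ! i) \<noteq> 0 \<longrightarrow>
          floor_m m (B ! i) < floor_m m (B ! (i + 1)))"

text \<open>Root vector, 0-based: entry i is m*i - b_{i+1}.\<close>
definition root_vector :: "nat \<Rightarrow> nat list \<Rightarrow> int list" where
  "root_vector m B = map (\<lambda>i. int (m * i) - int (B ! i)) [0..<length B]"

definition pad :: "nat \<Rightarrow> nat list \<Rightarrow> nat list" where
  "pad N B = replicate (N - length B) 0 @ B"

definition rook_graph_edge :: "nat \<Rightarrow> nat list \<Rightarrow> nat list \<Rightarrow> bool" where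
  "rook_graph_edge m B1 B2 \<longleftrightarrow>
     ferrers B1 \<and> ferrers B2 \<and> singleton_board m B1 \<and> singleton_board m B2 \<and>
     m_level_rook_equiv m B1 B2 \<and>
     (let N = max (length B1) (length B2); C1 = pad N B1; C2 = pad N B2 in
       \<exists>i j k. i < N \<and> j < N \<and> i \<noteq> j \<and> k > 0 \<and>
         C1 ! i = C2 ! i + k \<and> C1 ! j + k = C2 ! j \<and>
         (\<forall>l. l < N \<longrightarrow> l \<noteq> i \<longrightarrow> l \<noteq> j \<longrightarrow> C1 ! l = C2 ! l))"

end

theory Submission
  imports Defs
begin

abbreviation P where "P m k B \<equiv> m_level_rook_placements m k B"

lemma cells_eq: "cells B = (SIGMA i:{1..length B}. {1..B!(i-1)})"
  unfolding cells_def by auto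

lemma finite_cells: "finite (cells B)"
  unfolding cells_eq by auto

lemma P_zero: "P m 0 B = {{}}"
  unfolding m_level_rook_placements_def
  by (auto simp: card_eq_0_iff dest: finite_subset[OF _ finite_cells])

lemma P_card_le: assumes "S \<in> P m k B" shows "k \<le> length B"
proof -
  have fin: "finite S" using assms finite_cells unfolding m_level_rook_placements_def
    by (auto intro: finite_subset)
  have inj: "inj_on fst S" using assms unfolding m_level_rook_placements_def inj_on_def by blast
  have "fst ` S \<subseteq> {1..length B}" using assms unfolding m_level_rook_placements_def cells_def by auto
  then have "card (fst ` S) \<le> length B" using card_mono[of "{1..length B}"] by fastforce
  then show ?thesis using card_image[OF inj] assms unfolding m_level_rook_placements_def by auto
qed

lemma rook_num_big: "k > length B \<Longrightarrow> rook_num k m B = 0"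
proof -
  assume "k > length B"
  then have "P m k B = {}" using P_card_le by fastforce
  then show ?thesis unfolding rook_num_def by simp
qed

lemma rook_num_zero: "rook_num 0 m B = 1"
  unfolding rook_num_def P_zero by simp

lemma cells_snoc: "cells (B@[b]) = cells B \<union> {(length B + 1, r) | r. 1 \<le> r \<and> r \<le> b}"
  unfolding cells_def by (auto simp: nth_append le_Suc_eq split: if_splits)

lemma floor_m_eq: "floor_m m x = m * (x div m)"
  unfolding floor_m_def by (simp add: minus_mod_eq_mult_div)

lemma key_level:
  assumes m: "m > 0" and so: "sorted (B'@[b])" and sg: "singleton_board m (B'@[b])"
    and i: "1 \<le> i" "i \<le> length B'" and r: "1 \<le> r" "r \<le> B'!(i-1)"
  shows "(level m r + 1) * m \<le> b"
proof (rule ccontr)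
  assume ne: "\<not> ?thesis"
  define q where "q = (r - 1) div m"
  define a where "a = B'!(i-1)"
  define c where "c = (B'@[b])!i"
  have qm: "q * m \<le> r - 1" unfolding q_def using div_times_less_eq_dividend by (simp add: mult.commute)
  have bl: "b < (q+1)*m" using ne unfolding level_def q_def by simp
  have len: "length (B'@[b]) = length B' + 1" by simp
  have il: "i - 1 < length B'" using i by simp
  have aeq: "(B'@[b])!(i-1) = a" unfolding a_def using il by (simp add: nth_append)
  have ab1: "a \<le> c"
  proof -
    have "(B'@[b])!(i-1) \<le> c" unfolding c_def using sorted_nth_mono[OF so, of "i-1" i] i by simp
    then show ?thesis using aeq by simp
  qed
  have ab2: "c \<le> b" using so i unfolding a_def c_def
    using sorted_nth_mono[OF so, of i "length B'"] by (simp add: nth_append)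
  have ra: "r \<le> a" using r a_def by simp
  have adiv: "a div m = q" 
    by (rule div_nat_eqI) (use qm ra ab1 ab2 bl r m in \<open>auto simp: mult.commute\<close>)
  have bdiv: "b div m = q" 
    by (rule div_nat_eqI) (use qm ra ab1 ab2 bl r m in \<open>auto simp: mult.commute\<close>)
  have cdiv: "c div m = q" using div_le_mono[OF ab1, of m] div_le_mono[OF ab2, of m] adiv bdiv by simp
  have amod: "a mod m \<noteq> 0"
  proof
    assume "a mod m = 0"
    then have "a = m * q" using adiv by (metis mult_div_mod_eq add_0_right)
    then show False using qm ra r by (simp add: mult.commute)
  qed
  have "a - floor_m m a \<noteq> 0" using amod unfolding floor_m_def
    by (simp add: diff_diff_cancel mod_less_eq_dividend)
  moreover have "(i-1) + 1 < length (B'@[b])" using i by simp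
  moreover have "(B'@[b])!((i-1)+1) = c" unfolding c_def using i by simp
  ultimately have "floor_m m a < floor_m m c"
    using sg aeq unfolding singleton_board_def by metis
  then show False using adiv cdiv floor_m_eq by simp
qed

definition lev :: "nat \<Rightarrow> (nat \<times> nat) set \<Rightarrow> nat set" where
  "lev m S = (\<lambda>c. level m (snd c)) ` S"

definition avail :: "nat \<Rightarrow> nat \<Rightarrow> nat \<Rightarrow> (nat \<times> nat) set \<Rightarrow> (nat \<times> nat) set" where
  "avail m n b S = {(n+1, r) | r. 1 \<le> r \<and> r \<le> b \<and> level m r \<notin> lev m S}"

lemma level_block: "j < m \<Longrightarrow> level m (l*m+j+1) = l"
  unfolding level_def by simp

lemma avail_card:
  assumes m: "m > 0" and so: "sorted (B'@[b])" and sg: "singleton_board m (B'@[b])"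
    and S: "S \<in> P m k B'"
  shows "card (avail m (length B') b S) = b - m*k \<and> m*k \<le> b"
proof -
  define L where "L = lev m S"
  have fin: "finite S" using S finite_cells unfolding m_level_rook_placements_def
    by (auto intro: finite_subset)
  have inj: "inj_on (\<lambda>c. level m (snd c)) S"
    using S unfolding m_level_rook_placements_def inj_on_def by blast
  have cL: "card L = k" unfolding L_def lev_def using card_image[OF inj] S
    unfolding m_level_rook_placements_def by simp
  have finL: "finite L" unfolding L_def lev_def using fin by simp
  have hL: "(l+1)*m \<le> b" if lL: "l \<in> L" for l
  proof -
    obtain c where c: "c \<in> S" "l = level m (snd c)" using lL unfolding L_def lev_def by auto
    have "c \<in> cells B'" using c S unfolding m_level_rook_placements_def by auto
    then obtain i r where "c = (i,r)" "1 \<le> i" "i \<le> length B'" "1 \<le> r" "r \<le> B'!(i-1)"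
      unfolding cells_def by auto
    then show ?thesis using key_level[OF m so sg] c by auto
  qed
  define R where "R = {r. 1 \<le> r \<and> r \<le> b \<and> level m r \<in> L}"
  define f where "f = (\<lambda>(l,j). l*m+j+(1::nat))"
  have Req: "R = f ` (L \<times> {..<m})"
  proof
    show "R \<subseteq> f ` (L \<times> {..<m})"
    proof
      fix r assume r: "r \<in> R"
      have "r = f ((r-1) div m, (r-1) mod m)" unfolding f_def using r R_def
        by (simp add: mult.commute)
      moreover have "((r-1) div m, (r-1) mod m) \<in> L \<times> {..<m}" using r m unfolding R_def level_def by auto
      ultimately show "r \<in> f ` (L \<times> {..<m})" by blast
    qed
  next
    show "f ` (L \<times> {..<m}) \<subseteq> R"
    proof
      fix r assume "r \<in> f ` (L \<times> {..<m})"
      then obtain l j where lj: "l \<in> L" "j < m" "r = l*m+j+1" unfolding f_def by auto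
      have "(l+1)*m \<le> b" using hL lj by simp
      then have "r \<le> b" using lj by (simp add: algebra_simps)
      then show "r \<in> R" unfolding R_def using lj level_block by auto
    qed
  qed
  have injf: "inj_on f (L \<times> {..<m})"
  proof (rule inj_onI)
    fix x y assume x: "x \<in> L \<times> {..<m}" and y: "y \<in> L \<times> {..<m}" and e: "f x = f y"
    obtain l j where xl: "x = (l,j)" "j < m" using x by auto
    obtain l' j' where yl: "y = (l',j')" "j' < m" using y by auto
    have "l*m+j = l'*m+j'" using e xl yl unfolding f_def by simp
    then have "(l*m+j) div m = (l'*m+j') div m" "(l*m+j) mod m = (l'*m+j') mod m" by simp_all
    then show "x = y" using xl yl m by simp
  qed
  have cR: "card R = k*m" using Req card_image[OF injf] cL finL by (simp add: card_cartesian_product)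
  have Rsub: "R \<subseteq> {1..b}" unfolding R_def by auto
  have "card R \<le> b" using card_mono[OF _ Rsub] by simp
  then have le: "m*k \<le> b" using cR by (simp add: mult.commute)
  have "avail m (length B') b S = (\<lambda>r. (length B' + 1, r)) ` ({1..b} - R)"
    unfolding avail_def R_def L_def by auto
  moreover have "inj_on (\<lambda>r. (length B' + 1, r)) ({1..b} - R)" by (auto intro: inj_onI)
  ultimately have "card (avail m (length B') b S) = card ({1..b} - R)" by (simp add: card_image)
  also have "\<dots> = b - k*m" using card_Diff_subset[OF _ Rsub] cR finite_subset[OF Rsub] by simp
  finally show ?thesis using le by (simp add: mult.commute)
qed

lemma P_fin: "S \<in> P m k B \<Longrightarrow> finite S"
  unfolding m_level_rook_placements_def by (auto intro: finite_subset[OF _ finite_cells])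

lemma cells_col: "c \<in> cells B \<Longrightarrow> 1 \<le> fst c \<and> fst c \<le> length B"
  unfolding cells_def by auto

lemma P_snoc:
  "P m (Suc k) (B'@[b]) = P m (Suc k) B' \<union>
     (\<lambda>(S,c). insert c S) ` (SIGMA S:P m k B'. avail m (length B') b S)"
  (is "?L = ?R1 \<union> ?R2")
proof
  let ?n = "length B'"
  show "?L \<subseteq> ?R1 \<union> ?R2"
  proof
    fix S assume S: "S \<in> ?L"
    have fin: "finite S" using P_fin[OF S] .
    show "S \<in> ?R1 \<union> ?R2"
    proof (cases "\<exists>c\<in>S. fst c = ?n + 1")
      case False
      have "S \<subseteq> cells (B'@[b])" using S unfolding m_level_rook_placements_def by auto
      then have "S \<subseteq> cells B'" using False unfolding cells_snoc by force
      then have "S \<in> ?R1" using S unfolding m_level_rook_placements_def by auto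
      then show ?thesis by simp
    next
      case True
      then obtain c where c: "c \<in> S" "fst c = ?n + 1" by auto
      define S' where "S' = S - {c}"
      have dist: "\<forall>x\<in>S. \<forall>y\<in>S. x \<noteq> y \<longrightarrow> fst x \<noteq> fst y \<and> level m (snd x) \<noteq> level m (snd y)"
        using S unfolding m_level_rook_placements_def by auto
      have sub: "S \<subseteq> cells (B'@[b])" using S unfolding m_level_rook_placements_def by auto
      have "S' \<subseteq> cells B'"
      proof
        fix x assume x: "x \<in> S'"
        then have "x \<in> S" "x \<noteq> c" unfolding S'_def by auto
        then have "fst x \<noteq> ?n + 1" using dist[rule_format, of x c] c by simp
        then show "x \<in> cells B'" using sub \<open>x \<in> S\<close> unfolding cells_snoc by auto
      qed
      moreover have "card S' = k" using S c fin unfolding S'_def m_level_rook_placements_def by simp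
      ultimately have S'P: "S' \<in> P m k B'" using dist unfolding S'_def m_level_rook_placements_def by auto
      obtain r where r: "c = (?n+1, r)" "1 \<le> r" "r \<le> b"
        using c sub unfolding cells_snoc cells_def by auto
      have "level m r \<notin> lev m S'"
        using dist c r unfolding lev_def S'_def by force
      then have "c \<in> avail m ?n b S'" unfolding avail_def using r by auto
      moreover have "S = insert c S'" using c unfolding S'_def by auto
      ultimately have "S \<in> ?R2" using S'P by force
      then show ?thesis by simp
    qed
  qed
next
  let ?n = "length B'"
  show "?R1 \<union> ?R2 \<subseteq> ?L"
  proof
    fix S assume S: "S \<in> ?R1 \<union> ?R2"
    show "S \<in> ?L"
    proof (cases "S \<in> ?R1")
      case True
      then show ?thesis unfolding m_level_rook_placements_def cells_snoc by auto
    next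
      case False
      then obtain S' c where S': "S' \<in> P m k B'" "c \<in> avail m ?n b S'" "S = insert c S'"
        using S by auto
      obtain r where r: "c = (?n+1, r)" "1 \<le> r" "r \<le> b" "level m r \<notin> lev m S'"
        using S'(2) unfolding avail_def by auto
      have sub: "S' \<subseteq> cells B'" using S'(1) unfolding m_level_rook_placements_def by auto
      have cols: "\<forall>x\<in>S'. fst x \<le> ?n" using sub cells_col by auto
      have cn: "c \<notin> S'" using cols r by auto
      have "card S = Suc k" using S' cn P_fin[OF S'(1)] unfolding m_level_rook_placements_def by simp
      moreover have "S \<subseteq> cells (B'@[b])" using sub r S' unfolding cells_snoc by auto
      moreover have "\<forall>x\<in>S. \<forall>y\<in>S. x \<noteq> y \<longrightarrow> fst x \<noteq> fst y \<and> level m (snd x) \<noteq> level m (snd y)"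
      proof -
        have d': "\<forall>x\<in>S'. \<forall>y\<in>S'. x \<noteq> y \<longrightarrow> fst x \<noteq> fst y \<and> level m (snd x) \<noteq> level m (snd y)"
          using S'(1) unfolding m_level_rook_placements_def by blast
        have dc: "\<forall>x\<in>S'. fst x \<noteq> fst c \<and> level m (snd x) \<noteq> level m (snd c)"
        proof
          fix x assume x: "x \<in> S'"
          have "fst x \<noteq> fst c" using cols x r(1) by auto
          moreover have "level m (snd x) \<noteq> level m (snd c)" using x r(1,4) unfolding lev_def by force
          ultimately show "fst x \<noteq> fst c \<and> level m (snd x) \<noteq> level m (snd c)" by simp
        qed
        show ?thesis unfolding S'(3)
        proof (intro ballI impI)
          fix x y assume x: "x \<in> insert c S'" and y: "y \<in> insert c S'" and xy: "x \<noteq> y"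
          show "fst x \<noteq> fst y \<and> level m (snd x) \<noteq> level m (snd y)"
          proof (cases "x = c")
            case True
            then have "y \<in> S'" using y xy by auto
            then show ?thesis using dc True by metis
          next
            case False
            then have xS: "x \<in> S'" using x by auto
            show ?thesis
            proof (cases "y = c")
              case True then show ?thesis using dc xS by metis
            next
              case False then have "y \<in> S'" using y by auto
              then show ?thesis using d' xS xy by metis
            qed
          qed
        qed
      qed
      ultimately show ?thesis unfolding m_level_rook_placements_def by auto
    qed
  qed
qed

lemma P_finite: "finite (P m k B)"
proof -
  have "P m k B \<subseteq> Pow (cells B)" unfolding m_level_rook_placements_def by auto
  then show ?thesis using finite_cells by (auto intro: finite_subset)
qed

lemma rook_rec:
  assumes m: "m > 0" and so: "sorted (B'@[b])" and sg: "singleton_board m (B'@[b])"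
  shows "rook_num (Suc k) m (B'@[b]) = rook_num (Suc k) m B' + rook_num k m B' * (b - m*k)"
    and "rook_num k m B' > 0 \<Longrightarrow> m*k \<le> b"
proof -
  let ?n = "length B'"
  let ?R1 = "P m (Suc k) B'"
  let ?Sig = "SIGMA S:P m k B'. avail m ?n b S"
  let ?g = "\<lambda>(S,c). insert c S"
  have colsP: "\<forall>x\<in>S. fst x \<le> ?n" if "S \<in> P m j B'" for S j
    using that cells_col unfolding m_level_rook_placements_def by blast
  have colA: "fst c = ?n + 1" if "c \<in> avail m ?n b S" for c S
    using that unfolding avail_def by auto
  have finSig: "finite ?Sig"
    by (rule finite_SigmaI[OF P_finite]) (auto simp: avail_def)
  have inj: "inj_on ?g ?Sig"
  proof (rule inj_onI)
    fix x y assume x: "x \<in> ?Sig" and y: "y \<in> ?Sig" and e: "?g x = ?g y"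
    obtain S c where xs: "x = (S,c)" "S \<in> P m k B'" "c \<in> avail m ?n b S" using x by auto
    obtain S' c' where ys: "y = (S',c')" "S' \<in> P m k B'" "c' \<in> avail m ?n b S'" using y by auto
    have e2: "insert c S = insert c' S'" using e xs ys by simp
    have cS: "c \<notin> S" using colsP[OF xs(2)] colA[OF xs(3)] by auto
    have cS': "c' \<notin> S'" using colsP[OF ys(2)] colA[OF ys(3)] by auto
    have "c \<in> insert c' S'" using e2 by blast
    then have cc: "c = c'" using colsP[OF ys(2)] colA[OF xs(3)] by auto
    have "S = insert c S - {c}" using cS by simp
    also have "\<dots> = insert c' S' - {c'}" using e2 cc by simp
    also have "\<dots> = S'" using cS' by simp
    finally show "x = y" using xs ys cc by simp
  qed
  have disj: "?R1 \<inter> ?g ` ?Sig = {}"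
  proof -
    have "\<not> (T \<in> ?R1 \<and> T \<in> ?g ` ?Sig)" for T
    proof
      assume T: "T \<in> ?R1 \<and> T \<in> ?g ` ?Sig"
      then obtain S c where "(S,c) \<in> ?Sig" "T = insert c S" by auto
      then have "c \<in> T" "fst c = ?n + 1" using colA[of c S] by auto
      then show False using colsP T by fastforce
    qed
    then show ?thesis by blast
  qed
  have "rook_num (Suc k) m (B'@[b]) = card (?R1 \<union> ?g ` ?Sig)"
    unfolding rook_num_def P_snoc by simp
  also have "\<dots> = card ?R1 + card (?g ` ?Sig)"
    using card_Un_disjoint[OF P_finite finite_imageI[OF finSig] disj] .
  also have "card (?g ` ?Sig) = card ?Sig" using card_image[OF inj] .
  also have "\<dots> = (\<Sum>S\<in>P m k B'. card (avail m ?n b S))"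
    by (rule card_SigmaI[OF P_finite]) (auto simp: avail_def)
  also have "\<dots> = (\<Sum>S\<in>P m k B'. b - m*k)"
    using avail_card[OF m so sg] by simp
  also have "\<dots> = rook_num k m B' * (b - m*k)" unfolding rook_num_def by simp
  finally show "rook_num (Suc k) m (B'@[b]) = rook_num (Suc k) m B' + rook_num k m B' * (b - m*k)"
    unfolding rook_num_def by simp
  show "rook_num k m B' > 0 \<Longrightarrow> m*k \<le> b"
  proof -
    assume "rook_num k m B' > 0"
    then obtain S where "S \<in> P m k B'" unfolding rook_num_def by (metis card.empty ex_in_conv less_irrefl)
    then show ?thesis using avail_card[OF m so sg] by blast
  qed
qed

lemma rook_rec_int:
  assumes m: "m > 0" and so: "sorted (B'@[b])" and sg: "singleton_board m (B'@[b])"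
  shows "int (rook_num (Suc k) m (B'@[b])) = int (rook_num (Suc k) m B') + int (rook_num k m B') * (int b - int (m*k))"
proof (cases "rook_num k m B' > 0")
  case True
  then show ?thesis using rook_rec[OF m so sg] by (simp add: of_nat_diff)
next
  case False
  then show ?thesis using rook_rec[OF m so sg] by simp
qed

definition ff :: "nat \<Rightarrow> int \<Rightarrow> nat \<Rightarrow> int" where
  "ff m x k = (\<Prod>t<k. x - int (m*t))"

definition FF :: "nat \<Rightarrow> nat list \<Rightarrow> int \<Rightarrow> int" where
  "FF m B x = (\<Sum>j\<le>length B. int (rook_num j m B) * ff m x (length B - j))"

lemma ff_Suc: "ff m x (Suc k) = ff m x k * (x - int (m*k))"
  unfolding ff_def by simp

lemma singleton_prefix: "singleton_board m (B'@[b]) \<Longrightarrow> singleton_board m B'"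
  unfolding singleton_board_def
proof (intro allI impI)
  fix i assume h: "\<forall>i. i + 1 < length (B' @ [b]) \<longrightarrow> (B' @ [b]) ! i - floor_m m ((B' @ [b]) ! i) \<noteq> 0 \<longrightarrow>
          floor_m m ((B' @ [b]) ! i) < floor_m m ((B' @ [b]) ! (i + 1))"
    and i: "i + 1 < length B'" and ne: "B' ! i - floor_m m (B' ! i) \<noteq> 0"
  have "(B'@[b])!i = B'!i" "(B'@[b])!(i+1) = B'!(i+1)" using i by (simp_all add: nth_append)
  then show "floor_m m (B' ! i) < floor_m m (B' ! (i + 1))" using h[rule_format, of i] i ne by simp
qed

lemma aux_ring: "(a::int) + c = d \<Longrightarrow> r*f*(x - a) + r*(b - c)*f = r*f*(x + b - d)"
  by (drule sym) (simp add: algebra_simps)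

lemma factorization:
  assumes m: "m > 0" and so: "sorted B" and sg: "singleton_board m B"
  shows "FF m B x = (\<Prod>i<length B. x + int (B!i) - int (m*i))"
  using so sg
proof (induction B rule: rev_induct)
  case Nil
  then show ?case unfolding FF_def ff_def by (simp add: rook_num_zero)
next
  case (snoc b B')
  let ?n = "length B'"
  have so': "sorted B'" using snoc.prems(1) by (simp add: sorted_append)
  have sg': "singleton_board m B'" using singleton_prefix snoc.prems(2) by blast
  have IH: "FF m B' x = (\<Prod>i<?n. x + int (B'!i) - int (m*i))" using snoc.IH so' sg' by blast
  define r where "r j = int (rook_num j m B')" for j
  define s where "s j = int (rook_num j m (B'@[b]))" for j
  have rs: "s (Suc k) = r (Suc k) + r k * (int b - int (m*k))" for k
    unfolding r_def s_def using rook_rec_int[OF m snoc.prems] .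
  have r0: "r 0 = 1" "s 0 = 1" unfolding r_def s_def by (simp_all add: rook_num_zero)
  have rbig: "r (Suc ?n) = 0" unfolding r_def by (simp add: rook_num_big)
  have "FF m (B'@[b]) x = (\<Sum>j\<le>Suc ?n. s j * ff m x (Suc ?n - j))"
    unfolding FF_def s_def by simp
  also have "\<dots> = s 0 * ff m x (Suc ?n) + (\<Sum>k\<le>?n. s (Suc k) * ff m x (?n - k))"
    by (subst sum.atMost_Suc_shift) simp
  also have "\<dots> = ff m x (Suc ?n) + (\<Sum>k\<le>?n. r (Suc k) * ff m x (?n - k))
       + (\<Sum>k\<le>?n. r k * (int b - int (m*k)) * ff m x (?n - k))"
  proof -
    have "(\<Sum>k\<le>?n. s (Suc k) * ff m x (?n - k)) = (\<Sum>k\<le>?n. r (Suc k) * ff m x (?n - k)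
       + r k * (int b - int (m*k)) * ff m x (?n - k))"
      unfolding rs by (simp add: algebra_simps)
    then show ?thesis unfolding sum.distrib r0 by simp
  qed
  also have "ff m x (Suc ?n) + (\<Sum>k\<le>?n. r (Suc k) * ff m x (?n - k))
      = (\<Sum>k\<le>Suc ?n. r k * ff m x (Suc ?n - k))"
    by (subst sum.atMost_Suc_shift) (simp add: r0)
  also have "\<dots> = (\<Sum>k\<le>?n. r k * ff m x (Suc ?n - k))"
    by (simp add: rbig)
  also have "\<dots> = (\<Sum>k\<le>?n. r k * ff m x (?n - k) * (x - int (m*(?n - k))))"
  proof (rule sum.cong)
    fix k assume "k \<in> {..?n}"
    then have "Suc ?n - k = Suc (?n - k)" by simp
    then show "r k * ff m x (Suc ?n - k) = r k * ff m x (?n - k) * (x - int (m*(?n - k)))"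
      by (simp add: ff_Suc)
  qed simp
  also have "(\<Sum>k\<le>?n. r k * ff m x (?n - k) * (x - int (m*(?n - k))))
      + (\<Sum>k\<le>?n. r k * (int b - int (m*k)) * ff m x (?n - k))
      = (\<Sum>k\<le>?n. r k * ff m x (?n - k) * (x + int b - int (m * ?n)))"
    unfolding sum.distrib[symmetric]
  proof (rule sum.cong)
    fix k assume "k \<in> {..?n}"
    then have "int (m*(?n - k)) + int (m*k) = int (m * ?n)"
      by (simp add: algebra_simps flip: of_nat_add)
    then show "r k * ff m x (?n - k) * (x - int (m*(?n - k))) + r k * (int b - int (m*k)) * ff m x (?n - k)
        = r k * ff m x (?n - k) * (x + int b - int (m * ?n))"
      by (rule aux_ring)
  qed simp
  also have "\<dots> = FF m B' x * (x + int b - int (m * ?n))"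
    unfolding FF_def r_def by (simp add: sum_distrib_right)
  also have "\<dots> = (\<Prod>i<Suc ?n. x + int ((B'@[b])!i) - int (m*i))"
    unfolding IH by (simp add: nth_append)
  finally show ?case by simp
qed

lemma swap_list:
  assumes "length ys = length xs" "a < length xs" "b < length xs" "a \<noteq> b"
    and "\<And>l. l < length xs \<Longrightarrow> l \<noteq> a \<Longrightarrow> l \<noteq> b \<Longrightarrow> ys!l = xs!l"
    and "ys!a = xs!b" "ys!b = xs!a"
  shows "ys = xs[a := xs!b, b := xs!a]"
  by (rule nth_equalityI) (use assms in \<open>auto simp: nth_list_update\<close>)

lemma pad_same: "length B = n \<Longrightarrow> pad n B = B"
  unfolding pad_def by simp

lemma rv_nth: "l < length B \<Longrightarrow> root_vector m B ! l = int (m*l) - int (B!l)"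
  unfolding root_vector_def by simp

lemma rv_len: "length (root_vector m B) = length B"
  unfolding root_vector_def by simp

lemma quad: "(k::int) > 0 \<Longrightarrow> a * b = (a - k) * (b + k) \<Longrightarrow> a = b + k"
proof -
  assume k: "k > 0" and e: "a * b = (a - k) * (b + k)"
  have "k * (a - b - k) = 0" using e by (simp add: algebra_simps)
  then show ?thesis using k by simp
qed

theorem theorem17:
  fixes m n :: nat and B1 B2 :: "nat list"
  assumes "m > 0"
    and "length B1 = n" and "length B2 = n"
    and "ferrers B1" and "ferrers B2"
    and "singleton_board m B1" and "singleton_board m B2"
    and "m_level_rook_equiv m B1 B2"
    and "rook_graph_edge m B1 B2"
  shows "\<exists>i1 i2. i1 < i2 \<and> i2 < n \<and>
           root_vector m B1 ! i1 \<noteq> root_vector m B1 ! i2 \<and>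
           root_vector m B2 = (root_vector m B1)[i1 := root_vector m B1 ! i2,
                                                i2 := root_vector m B1 ! i1]"
proof -
  note m = assms(1) and l1 = assms(2) and l2 = assms(3)
  obtain i j k where ij: "i < n" "j < n" "i \<noteq> j" "k > 0" "B1!i = B2!i + k" "B1!j + k = B2!j"
    and oth: "\<And>l. l < n \<Longrightarrow> l \<noteq> i \<Longrightarrow> l \<noteq> j \<Longrightarrow> B1!l = B2!l"
    using assms(9) l1 l2 pad_same[OF l1] pad_same[OF l2] unfolding rook_graph_edge_def Let_def
    by auto
  define x :: int where "x = int (m*n) + 1"
  define f1 where "f1 l = x + int (B1!l) - int (m*l)" for l
  define f2 where "f2 l = x + int (B2!l) - int (m*l)" for l
  have FFeq: "FF m B1 x = FF m B2 x"
    using assms(8) l1 l2 unfolding FF_def m_level_rook_equiv_def by simp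
  have pe: "(\<Prod>l<n. f1 l) = (\<Prod>l<n. f2 l)"
    using FFeq factorization[OF m, of B1 x] factorization[OF m, of B2 x] assms(4-7) l1 l2
    unfolding f1_def f2_def ferrers_def by simp
  have pos: "f2 l > 0" if "l < n" for l
  proof -
    have "m*l \<le> m*n" using that by simp
    then show ?thesis unfolding f2_def x_def by linarith
  qed
  define A where "A = {..<n} - {i} - {j}"
  have dec: "(\<Prod>l<n. f l) = f i * f j * (\<Prod>l\<in>A. f l)" for f :: "nat \<Rightarrow> int"
  proof -
    have "(\<Prod>l<n. f l) = f i * (\<Prod>l\<in>{..<n} - {i}. f l)" using ij by (simp add: prod.remove)
    also have "(\<Prod>l\<in>{..<n} - {i}. f l) = f j * (\<Prod>l\<in>A. f l)" unfolding A_def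
      using ij by (subst prod.remove[of _ j]) auto
    finally show ?thesis by simp
  qed
  have Aeq: "(\<Prod>l\<in>A. f1 l) = (\<Prod>l\<in>A. f2 l)"
    by (rule prod.cong) (auto simp: A_def f1_def f2_def oth)
  have Apos: "(\<Prod>l\<in>A. f2 l) > 0"
    by (rule prod_pos) (auto simp: A_def pos)
  have "f1 i * f1 j = f2 i * f2 j"
    using pe dec[of f1] dec[of f2] Aeq Apos by simp
  moreover have "f2 i = f1 i - int k" "f2 j = f1 j + int k" using ij unfolding f1_def f2_def by simp_all
  ultimately have key: "f1 i = f1 j + int k" using quad[of "int k" "f1 i" "f1 j"] ij by simp
  let ?z1 = "root_vector m B1" and ?z2 = "root_vector m B2"
  have z2: "?z2 = ?z1[i := ?z1!j, j := ?z1!i]"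
  proof (rule swap_list)
    show "length ?z2 = length ?z1" using l1 l2 by (simp add: rv_len)
    show "i < length ?z1" "j < length ?z1" "i \<noteq> j" using ij l1 by (simp_all add: rv_len)
    show "?z2!l = ?z1!l" if "l < length ?z1" "l \<noteq> i" "l \<noteq> j" for l
      using that oth l1 l2 by (simp add: rv_len rv_nth)
    show "?z2!i = ?z1!j" "?z2!j = ?z1!i" using key ij l1 l2 unfolding f1_def
      by (simp_all add: rv_nth)
  qed
  have ne: "?z1!i \<noteq> ?z1!j" using key ij l1 unfolding f1_def by (simp add: rv_nth)
  show ?thesis
  proof (cases "i < j")
    case True
    then show ?thesis using z2 ne ij by blast
  next
    case False
    then have "j < i" using ij by simp
    moreover have "?z2 = ?z1[j := ?z1!i, i := ?z1!j]" using z2 ij by (simp add: list_update_swap)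
    ultimately show ?thesis using ne ij by metis
  qed
qed
end
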